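(* Let $\mathfrak{B}$ be a finite cyclic group, of order at least $3$, of invertible diagonal $2\times2$ complex matrices, containing three pairwise linearly independent matrices. Let $n\ge3$ and let $F$ be a Boolean function of arity $2n$ such that every function of arity less than $2n$ realizable by a gadget of $\#(\{F\}\cup\mathfrak{B})$ lies in $\lambda\langle\mathfrak{B}\rangle$. Then either $F$ is the zero function, or there exist two distinct variables $x,y$ of $F$ such that both $F^{00}_{xy}$ and $F^{11}_{xy}$ are nonzero functions.
   Context: Matrices in $\mathfrak{B}$ are binary functions $M(u,v)=M_{uv}$. $\#\mathcal{G}$: input a finite multigraph whose vertices carry functions from $\mathcal{G}$ of arity equal to the degree (edges act as binary equality); output the sum over $\{0,1\}$-edge assignments of the product of vertex functions. Gadgets are such networks with dangling edges; realizable functions are their functions. $\langle\mathfrak{B}\rangle$ is the set of functions $x\mapsto\prod_{j=1}^m M_j(x_{\pi(2j-1)},x_{\pi(2j)})$ with $\pi$ a permutation of the $2m$ variables and $M_j\in\mathfrak{B}$; $\lambda\langle\mathfrak{B}\rangle=\{\lambda f:\lambda\in\mathbb{C},f\in\langle\mathfrak{B}\rangle\}$. For variables $x,y$ of $F$ and $a,b\in\{0,1\}$, $F^{ab}_{xy}$ is the arity-$(2n-2)$ function obtained from $F$ by fixing $x=a$, $y=b$. *)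

theory Defs
  imports "HOL-Analysis.Analysis" "HOL-Library.FuncSet"
begin

text \<open>Matrices are complex 2x2 matrices; index 1 corresponds to the Boolean value 0 (False),
  index 2 to the value 1 (True).\<close>

fun mpow :: "complex^2^2 \<Rightarrow> nat \<Rightarrow> complex^2^2" where
  "mpow A 0 = mat 1"
| "mpow A (Suc k) = A ** mpow A k"

definition diagonal2 :: "complex^2^2 \<Rightarrow> bool" where
  "diagonal2 M \<longleftrightarrow> (\<forall>i j. i \<noteq> j \<longrightarrow> M $ i $ j = 0)"

definition finite_cyclic_group :: "(complex^2^2) set \<Rightarrow> bool" where
  "finite_cyclic_group B \<longleftrightarrow> finite B \<and> (\<exists>g. B = range (mpow g))"

definition lin_indep2 :: "complex^2^2 \<Rightarrow> complex^2^2 \<Rightarrow> bool" where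
  "lin_indep2 M N \<longleftrightarrow>
     (\<forall>a b::complex. (\<forall>i j. a * M $ i $ j + b * N $ i $ j = 0) \<longrightarrow> a = 0 \<and> b = 0)"

definition bidx :: "bool \<Rightarrow> 2" where
  "bidx u = (if u then 2 else 1)"

definition matf :: "complex^2^2 \<Rightarrow> bool \<Rightarrow> bool \<Rightarrow> complex" where
  "matf M u v = M $ bidx u $ bidx v"

text \<open>A signature: an arity together with a function on Boolean lists (only lists of
  that length matter).\<close>
type_synonym sig = "nat \<times> (bool list \<Rightarrow> complex)"

definition sig_of_mat :: "complex^2^2 \<Rightarrow> sig" where
  "sig_of_mat M = (2, \<lambda>x. matf M (x ! 0) (x ! 1))"

text \<open>Gadgets: m vertices labelled by lab i (arity, function); vertex i has ports (i,j), j < arity.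
  Dangling edges 0..<k are attached to the ports ext 0, ..., ext (k-1); the remaining ports are
  matched into internal edges by the fixed-point-free involution pr.\<close>
definition ports :: "nat \<Rightarrow> (nat \<Rightarrow> sig) \<Rightarrow> (nat \<times> nat) set" where
  "ports m lab = {(i, j). i < m \<and> j < fst (lab i)}"

definition internal_ports :: "nat \<Rightarrow> (nat \<Rightarrow> sig) \<Rightarrow> nat \<Rightarrow> (nat \<Rightarrow> nat \<times> nat) \<Rightarrow> (nat \<times> nat) set" where
  "internal_ports m lab k ext = ports m lab - ext ` {..<k}"

definition wf_gadget :: "sig set \<Rightarrow> nat \<Rightarrow> (nat \<Rightarrow> sig) \<Rightarrow> nat \<Rightarrow> (nat \<Rightarrow> nat \<times> nat)
    \<Rightarrow> (nat \<times> nat \<Rightarrow> nat \<times> nat) \<Rightarrow> bool" where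
  "wf_gadget G m lab k ext pr \<longleftrightarrow>
     (\<forall>i<m. lab i \<in> G) \<and> inj_on ext {..<k} \<and> ext ` {..<k} \<subseteq> ports m lab \<and>
     (\<forall>p \<in> internal_ports m lab k ext.
        pr p \<in> internal_ports m lab k ext \<and> pr p \<noteq> p \<and> pr (pr p) = p)"

text \<open>Value of the gadget on the dangling-edge assignment x: sum over all {0,1}-assignments
  of the edges (encoded as port assignments constant along every edge) of the product of the
  vertex functions.\<close>
definition gadget_fun :: "nat \<Rightarrow> (nat \<Rightarrow> sig) \<Rightarrow> nat \<Rightarrow> (nat \<Rightarrow> nat \<times> nat)
    \<Rightarrow> (nat \<times> nat \<Rightarrow> nat \<times> nat) \<Rightarrow> bool list \<Rightarrow> complex" where
  "gadget_fun m lab k ext pr x =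
     (\<Sum>\<tau> \<in> {\<tau> \<in> PiE (ports m lab) (\<lambda>_. UNIV).
              (\<forall>p \<in> internal_ports m lab k ext. \<tau> p = \<tau> (pr p)) \<and> (\<forall>i<k. \<tau> (ext i) = x ! i)}.
        \<Prod>i<m. snd (lab i) (map (\<lambda>j. \<tau> (i, j)) [0..<fst (lab i)]))"

definition realizable :: "sig set \<Rightarrow> nat \<Rightarrow> (bool list \<Rightarrow> complex) \<Rightarrow> bool" where
  "realizable G k f \<longleftrightarrow>
     (\<exists>m lab ext pr. wf_gadget G m lab k ext pr \<and>
        (\<forall>x. length x = k \<longrightarrow> gadget_fun m lab k ext pr x = f x))"

definition in_lam_span :: "(complex^2^2) set \<Rightarrow> nat \<Rightarrow> (bool list \<Rightarrow> complex) \<Rightarrow> bool" where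
  "in_lam_span B k f \<longleftrightarrow>
     (\<exists>(c::complex) m \<pi> Ms. k = 2 * m \<and> bij_betw \<pi> {..<2*m} {..<2*m} \<and> (\<forall>j<m. Ms j \<in> B) \<and>
        (\<forall>x. length x = k \<longrightarrow>
           f x = c * (\<Prod>j<m. matf (Ms j) (x ! \<pi> (2*j)) (x ! \<pi> (2*j+1)))))"

definition pinned_nonzero :: "nat \<Rightarrow> (bool list \<Rightarrow> complex) \<Rightarrow> nat \<Rightarrow> nat \<Rightarrow> bool \<Rightarrow> bool \<Rightarrow> bool" where
  "pinned_nonzero k F x y a b \<longleftrightarrow>
     (\<exists>z. length z = k \<and> z ! x = a \<and> z ! y = b \<and> F z \<noteq> 0)"

end

theory Submission
  imports Defs
begin


lemma bidx_eq: "bidx a = bidx b \<longleftrightarrow> a = b"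
  by (auto simp: bidx_def)

lemma diag_nz:
  assumes "invertible M" "diagonal2 M"
  shows "matf M a a \<noteq> 0"
proof -
  have "det M \<noteq> 0" using assms(1) invertible_det_nz by blast
  moreover have "M$1$2 = 0" "M$2$1 = 0" using assms(2) by (auto simp: diagonal2_def)
  ultimately have "M$1$1 \<noteq> 0" "M$2$2 \<noteq> 0" by (auto simp: det_2)
  then show ?thesis by (cases a) (auto simp: matf_def bidx_def)
qed

lemma diag_offz:
  assumes "diagonal2 M" "matf M a b \<noteq> 0"
  shows "a = b"
  using assms bidx_eq unfolding diagonal2_def matf_def by metis

lemma lam_compl:
  assumes Binv: "\<forall>M\<in>B. invertible M \<and> diagonal2 M"
    and L: "in_lam_span B k f" and len: "length w = k" and nz: "f w \<noteq> 0"
  shows "f (map Not w) \<noteq> 0"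
proof -
  obtain c m \<pi> Ms where k: "k = 2*m" and bij: "bij_betw \<pi> {..<2*m} {..<2*m}"
    and Ms: "\<forall>j<m. Ms j \<in> B"
    and fx: "\<forall>x. length x = k \<longrightarrow> f x = c * (\<Prod>j<m. matf (Ms j) (x ! \<pi> (2*j)) (x ! \<pi> (2*j+1)))"
    using L unfolding in_lam_span_def by blast
  have pi: "\<pi> (2*j) < k" "\<pi> (2*j+1) < k" if "j < m" for j
    using bij that k unfolding bij_betw_def by auto
  have fw: "f w = c * (\<Prod>j<m. matf (Ms j) (w ! \<pi> (2*j)) (w ! \<pi> (2*j+1)))" using fx len by blast
  have c: "c \<noteq> 0" using nz fw by auto
  have eq: "w ! \<pi> (2*j) = w ! \<pi> (2*j+1)" if "j < m" for j
  proof -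
    have "matf (Ms j) (w ! \<pi> (2*j)) (w ! \<pi> (2*j+1)) \<noteq> 0" using nz fw that by auto
    then show ?thesis using diag_offz Binv Ms that by blast
  qed
  have "f (map Not w) = c * (\<Prod>j<m. matf (Ms j) (map Not w ! \<pi> (2*j)) (map Not w ! \<pi> (2*j+1)))"
    using fx len by simp
  also have "\<dots> = c * (\<Prod>j<m. matf (Ms j) (\<not> w ! \<pi> (2*j)) (\<not> w ! \<pi> (2*j)))"
    using pi eq len by (intro arg_cong[where f="\<lambda>t. c * t"] prod.cong) auto
  also have "\<dots> \<noteq> 0" using c diag_nz Binv Ms by auto
  finally show ?thesis .
qed

definition PG :: "(nat \<Rightarrow> bool) \<Rightarrow> bool" where
  "PG b \<longleftrightarrow> (\<exists>x y u v. x<5 \<and> y<5 \<and> u<5 \<and> v<5 \<and> x\<noteq>y \<and> x\<noteq>u \<and> x\<noteq>v \<and> y\<noteq>u \<and> y\<noteq>v \<and> u\<noteq>v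
     \<and> b x = b y \<and> b u = b v)"

lemma PGI: "b x = b y \<Longrightarrow> b u = b v \<Longrightarrow> x<5 \<and> y<5 \<and> u<5 \<and> v<5 \<and> x\<noteq>y \<and> x\<noteq>u \<and> x\<noteq>v \<and> y\<noteq>u \<and> y\<noteq>v \<and> u\<noteq>v \<Longrightarrow> PG b"
  unfolding PG_def by blast

lemma pig: "PG b"
proof -
  have "b 0 = b 1 \<or> b 0 = b 2 \<or> b 1 = b 2" by auto
  moreover have "b 2 = b 3 \<or> b 2 = b 4 \<or> b 3 = b 4" by auto
  moreover have "b 1 = b 3 \<or> b 1 = b 4 \<or> b 3 = b 4" by auto
  moreover have "b 0 = b 3 \<or> b 0 = b 4 \<or> b 3 = b 4" by auto
  ultimately show ?thesis
    using PGI[of b 0 1 2 3] PGI[of b 0 1 2 4] PGI[of b 0 1 3 4]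
      PGI[of b 0 2 1 3] PGI[of b 0 2 1 4] PGI[of b 0 2 3 4]
      PGI[of b 1 2 0 3] PGI[of b 1 2 0 4] PGI[of b 1 2 3 4]
    by auto
qed


definition insl :: "(nat \<Rightarrow> nat) \<Rightarrow> nat \<Rightarrow> nat \<Rightarrow> nat \<Rightarrow> bool list \<Rightarrow> bool \<Rightarrow> bool list" where
  "insl e N x y w a = map (\<lambda>j. if j = x \<or> j = y then a else w ! (inv_into {..<N-2} e j)) [0..<N]"

lemma loop_realizable:
  assumes G: "(N, F) \<in> G" and xy: "x < N" "y < N" "x \<noteq> y"
    and e: "bij_betw e {..<N-2} ({..<N} - {x,y})"
  shows "realizable G (N-2) (\<lambda>w. F (insl e N x y w False) + F (insl e N x y w True))"
proof -
  define k where "k = N - 2"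
  define lab :: "nat \<Rightarrow> sig" where "lab = (\<lambda>_. (N, F))"
  define ext where "ext = (\<lambda>i::nat. (0::nat, e i))"
  define pr where "pr = (\<lambda>p::nat\<times>nat. if p = (0,x) then (0,y) else if p = (0,y) then (0,x) else p)"
  define ei where "ei = inv_into {..<k} e"
  have P: "ports 1 lab = {0} \<times> {..<N}" unfolding ports_def lab_def by auto
  have eimg: "e ` {..<k} = {..<N} - {x,y}" using e unfolding k_def bij_betw_def by auto
  have einj: "inj_on e {..<k}" using e unfolding k_def bij_betw_def by auto
  have extimg: "ext ` {..<k} = {0} \<times> ({..<N} - {x,y})" unfolding ext_def using eimg by auto
  have I: "internal_ports 1 lab k ext = {(0,x),(0,y)}"
    unfolding internal_ports_def P extimg using xy by auto
  have wf: "wf_gadget G 1 lab k ext pr"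
    unfolding wf_gadget_def
  proof (intro conjI)
    show "\<forall>i<1. lab i \<in> G" using G lab_def by auto
    show "inj_on ext {..<k}" using einj unfolding ext_def inj_on_def by auto
    show "ext ` {..<k} \<subseteq> ports 1 lab" unfolding P extimg by auto
    show "\<forall>p\<in>internal_ports 1 lab k ext. pr p \<in> internal_ports 1 lab k ext \<and> pr p \<noteq> p \<and> pr (pr p) = p"
      unfolding I pr_def using xy by auto
  qed
  have eiE: "e (ei j) = j" "ei j < k" if "j < N" "j \<noteq> x" "j \<noteq> y" for j
  proof -
    have "j \<in> e ` {..<k}" using that eimg by auto
    then show "e (ei j) = j" "ei j < k" unfolding ei_def
      using f_inv_into_f[of j e "{..<k}"] inv_into_into[of j e "{..<k}"] by auto
  qed
  have eie: "ei (e i) = i" if "i < k" for i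
    using einj that unfolding ei_def by (simp add: inv_into_f_f)
  have val: "gadget_fun 1 lab k ext pr w = F (insl e N x y w False) + F (insl e N x y w True)"
    if lw: "length w = k" for w
  proof -
    define tau :: "bool \<Rightarrow> nat \<times> nat \<Rightarrow> bool" where "tau = (\<lambda>a. restrict (\<lambda>p. if snd p = x \<or> snd p = y then a else w ! (ei (snd p))) ({0::nat} \<times> {..<N}))"
    define T where "T = {\<tau> \<in> PiE (ports 1 lab) (\<lambda>_. UNIV).
              (\<forall>p \<in> internal_ports 1 lab k ext. \<tau> p = \<tau> (pr p)) \<and> (\<forall>i<k. \<tau> (ext i) = w ! i)}"
    have T: "T = range tau"
    proof
      show "T \<subseteq> range tau"
      proof
        fix \<tau> assume t: "\<tau> \<in> T"
        have "\<tau> = tau (\<tau> (0,x))"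
        proof
          fix p
          show "\<tau> p = tau (\<tau> (0, x)) p"
          proof (cases "p \<in> {0} \<times> {..<N}")
            case False
            have "\<tau> \<in> extensional ({0} \<times> {..<N})" using t unfolding T_def P by (auto simp: PiE_def)
            then have "\<tau> p = undefined" using False by (cases p) (auto simp: extensional_def)
            then show ?thesis using False unfolding tau_def by simp
          next
            case True
            then obtain j where p: "p = (0,j)" "j < N" by auto
            have "(0,y) \<in> internal_ports 1 lab k ext" unfolding I by simp
            then have "\<tau> (0,y) = \<tau> (pr (0,y))" using t unfolding T_def by blast
            moreover have "pr (0,y) = (0,x)" using xy by (simp add: pr_def)
            ultimately have c2: "\<tau> (0,y) = \<tau> (0,x)" by simp
            show ?thesis
            proof (cases "j = x \<or> j = y")
              case True then show ?thesis using p c2 unfolding tau_def by auto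
            next
              case False
              then have "\<tau> (ext (ei j)) = w ! ei j" using t eiE p unfolding T_def by auto
              then show ?thesis using p False eiE unfolding tau_def ext_def by auto
            qed
          qed
        qed
        then show "\<tau> \<in> range tau" by blast
      qed
      show "range tau \<subseteq> T"
      proof
        fix t assume "t \<in> range tau"
        then obtain a where a: "t = tau a" by auto
        have "t \<in> PiE (ports 1 lab) (\<lambda>_. UNIV)" unfolding a tau_def P by auto
        moreover have "\<forall>p \<in> internal_ports 1 lab k ext. t p = t (pr p)"
          unfolding I a tau_def pr_def using xy by auto
        moreover have "\<forall>i<k. t (ext i) = w ! i"
        proof (intro allI impI)
          fix i assume i: "i < k"
          have "e i \<in> {..<N} - {x,y}" using eimg i by auto
          then show "t (ext i) = w ! i" unfolding a tau_def ext_def using eie i by auto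
        qed
        ultimately show "t \<in> T" unfolding T_def by blast
      qed
    qed
    have injt: "inj tau"
    proof (rule injI)
      fix a b assume "tau a = tau b"
      then have "tau a (0,x) = tau b (0,x)" by simp
      then show "a = b" unfolding tau_def using xy by auto
    qed
    have prodv: "(\<Prod>i<1. snd (lab i) (map (\<lambda>j. tau a (i, j)) [0..<fst (lab i)])) = F (insl e N x y w a)" for a
    proof -
      have "map (\<lambda>j. tau a (0, j)) [0..<N] = insl e N x y w a"
        unfolding insl_def
      proof (rule map_cong[OF refl])
        fix j assume "j \<in> set [0..<N]"
        then have "j < N" by simp
        then show "tau a (0, j) = (if j = x \<or> j = y then a else w ! inv_into {..<N - 2} e j)"
          unfolding tau_def ei_def k_def by simp
      qed
      then show ?thesis unfolding lab_def by simp
    qed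
    have "gadget_fun 1 lab k ext pr w = (\<Sum>\<tau>\<in>T. \<Prod>i<1. snd (lab i) (map (\<lambda>j. \<tau> (i, j)) [0..<fst (lab i)]))"
      unfolding gadget_fun_def T_def ..
    also have "\<dots> = (\<Sum>a\<in>UNIV. \<Prod>i<1. snd (lab i) (map (\<lambda>j. tau a (i, j)) [0..<fst (lab i)]))"
      unfolding T using injt by (simp add: sum.reindex)
    also have "\<dots> = F (insl e N x y w False) + F (insl e N x y w True)"
      unfolding prodv by (simp add: UNIV_bool)
    finally show ?thesis .
  qed
  show ?thesis unfolding realizable_def k_def[symmetric] using wf val by blast
qed


lemma insl_nth: "j < N \<Longrightarrow> insl e N x y w a ! j = (if j = x \<or> j = y then a else w ! inv_into {..<N-2} e j)"
  and insl_len: "length (insl e N x y w a) = N"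
  unfolding insl_def by auto

theorem mainTheorem13:
  fixes B :: "(complex^2^2) set" and n :: nat and F :: "bool list \<Rightarrow> complex"
  assumes B_cyc: "finite_cyclic_group B"
    and B_card: "card B \<ge> 3"
    and B_inv: "\<forall>M\<in>B. invertible M \<and> diagonal2 M"
    and B_indep: "\<exists>M1\<in>B. \<exists>M2\<in>B. \<exists>M3\<in>B.
                    lin_indep2 M1 M2 \<and> lin_indep2 M1 M3 \<and> lin_indep2 M2 M3"
    and n3: "n \<ge> 3"
    and hyp: "\<forall>k f. k < 2 * n \<longrightarrow>
                realizable (insert (2 * n, F) (sig_of_mat ` B)) k f \<longrightarrow> in_lam_span B k f"
  shows "(\<forall>z. length z = 2 * n \<longrightarrow> F z = 0) \<or>
         (\<exists>x<2*n. \<exists>y<2*n. x \<noteq> y \<and>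
            pinned_nonzero (2 * n) F x y False False \<and> pinned_nonzero (2 * n) F x y True True)"
proof (rule disjCI)
  define N where "N = 2 * n"
  assume notQ0: "\<not> (\<exists>x<2*n. \<exists>y<2*n. x \<noteq> y \<and>
            pinned_nonzero (2 * n) F x y False False \<and> pinned_nonzero (2 * n) F x y True True)"
  have notQ: "\<not> (pinned_nonzero N F x y c c \<and> pinned_nonzero N F x y (\<not>c) (\<not>c))"
    if "x < N" "y < N" "x \<noteq> y" for x y c
    using notQ0 that unfolding N_def by (cases c) auto
  have step: "F (map (\<lambda>j. if j = x \<or> j = y then c else \<not> z ! j) [0..<N]) \<noteq> 0"
    if xy: "x < N" "y < N" "x \<noteq> y" and z: "length z = N" "z ! x = c" "z ! y = c" "F z \<noteq> 0"
    for x y c z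
  proof -
    define z2 where "z2 = map (\<lambda>j. if j = x \<or> j = y then c else \<not> z ! j) [0..<N]"
    have "pinned_nonzero N F x y c c" unfolding pinned_nonzero_def using z by blast
    then have "\<not> pinned_nonzero N F x y (\<not>c) (\<not>c)" using notQ xy by blast
    then have F0: "F z' = 0" if "length z' = N" "z' ! x = (\<not>c)" "z' ! y = (\<not>c)" for z'
      using that unfolding pinned_nonzero_def by blast
    have fin: "finite ({..<N} - {x,y})" by simp
    have cd: "card ({..<N} - {x,y}) = N - 2" using xy by (simp add: card_Diff_subset)
    obtain e where e: "bij_betw e {..<N-2} ({..<N} - {x,y})"
      using ex_bij_betw_nat_finite[OF fin] unfolding cd atLeast0LessThan by blast
    have eimg: "e ` {..<N-2} = {..<N} - {x,y}" and einj: "inj_on e {..<N-2}"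
      using e unfolding bij_betw_def by auto
    define f where "f = (\<lambda>w. F (insl e N x y w False) + F (insl e N x y w True))"
    have "realizable (insert (2 * n, F) (sig_of_mat ` B)) (N-2) f"
      unfolding f_def by (rule loop_realizable) (use xy e in \<open>auto simp: N_def\<close>)
    then have L: "in_lam_span B (N-2) f" using hyp n3 unfolding N_def by auto
    define w where "w = map (\<lambda>i. z ! e i) [0..<N-2]"
    have lw: "length w = N - 2" unfolding w_def by simp
    have ie: "inv_into {..<N-2} e j < N - 2" "e (inv_into {..<N-2} e j) = j"
      if "j < N" "j \<noteq> x" "j \<noteq> y" for j
    proof -
      have "j \<in> e ` {..<N-2}" using that eimg by auto
      then show "inv_into {..<N-2} e j < N - 2" "e (inv_into {..<N-2} e j) = j"
        using f_inv_into_f[of j e "{..<N-2}"] inv_into_into[of j e "{..<N-2}"] by auto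
    qed
    have wn: "w ! i = z ! e i" if "i < N - 2" for i unfolding w_def using that by simp
    have i1: "insl e N x y w c = z"
    proof (rule nth_equalityI)
      show "length (insl e N x y w c) = length z" using z by (simp add: insl_len)
      fix j assume "j < length (insl e N x y w c)"
      then have j: "j < N" by (simp add: insl_len)
      show "insl e N x y w c ! j = z ! j"
      proof (cases "j = x \<or> j = y")
        case True then show ?thesis using j z by (auto simp: insl_nth)
      next
        case False
        then have "insl e N x y w c ! j = w ! inv_into {..<N-2} e j" using j by (simp add: insl_nth)
        also have "\<dots> = z ! j" using wn ie j False by simp
        finally show ?thesis .
      qed
    qed
    have i2: "insl e N x y (map Not w) c = z2"
    proof (rule nth_equalityI)
      show "length (insl e N x y (map Not w) c) = length z2" by (simp add: insl_len z2_def)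
      fix j assume "j < length (insl e N x y (map Not w) c)"
      then have j: "j < N" by (simp add: insl_len)
      show "insl e N x y (map Not w) c ! j = z2 ! j"
      proof (cases "j = x \<or> j = y")
        case True then show ?thesis using j by (auto simp: insl_nth z2_def)
      next
        case False
        then have "insl e N x y (map Not w) c ! j = map Not w ! inv_into {..<N-2} e j" using j by (simp add: insl_nth)
        also have "\<dots> = (\<not> z ! j)" using wn ie j False lw by simp
        finally show ?thesis using j False by (simp add: z2_def)
      qed
    qed
    have o1: "F (insl e N x y w' (\<not>c)) = 0" for w'
      by (rule F0) (use xy in \<open>auto simp: insl_len insl_nth\<close>)
    have fw: "f w = F z" using i1 o1[of w] unfolding f_def by (cases c) auto
    have "f (map Not w) \<noteq> 0" using lam_compl[OF B_inv L lw] fw z by auto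
    moreover have "f (map Not w) = F z2" using i2 o1[of "map Not w"] unfolding f_def by (cases c) auto
    ultimately show ?thesis unfolding z2_def by simp
  qed
  show "\<forall>z. length z = 2 * n \<longrightarrow> F z = 0"
  proof (rule ccontr)
    assume "\<not> (\<forall>z. length z = 2 * n \<longrightarrow> F z = 0)"
    then obtain z where z: "length z = N" "F z \<noteq> 0" unfolding N_def by auto
    have N6: "N \<ge> 6" using n3 unfolding N_def by simp
    obtain x y u v where P: "x<5" "y<5" "u<5" "v<5" "x\<noteq>y" "x\<noteq>u" "x\<noteq>v" "y\<noteq>u" "y\<noteq>v" "u\<noteq>v"
      "z ! x = z ! y" "z ! u = z ! v"
      using pig[of "\<lambda>i. z ! i"] unfolding PG_def by blast
    define z2 where "z2 = map (\<lambda>j. if j = x \<or> j = y then z ! x else \<not> z ! j) [0..<N]"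
    have xN: "x < N" "y < N" using P N6 by auto
    have F2: "F z2 \<noteq> 0" unfolding z2_def by (rule step) (use xN P z in simp_all)
    define d where "d = z ! u"
    have "pinned_nonzero N F u v d d" unfolding pinned_nonzero_def d_def using z P by auto
    moreover have "pinned_nonzero N F u v (\<not>d) (\<not>d)" unfolding pinned_nonzero_def
      using F2 P N6 unfolding z2_def d_def by (intro exI[of _ z2]) (auto simp: z2_def)
    ultimately show False using notQ[of u v d] P N6 by auto
  qed
qed
end
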